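(* Let $A$ be a commutative ring. Any intersection $\bigcap_i \mathfrak{q}_i$ of primary ideals $\mathfrak{q}_i$ of $A$ is an $(A \setminus \bigcup_i \sqrt{\mathfrak{q}_i})$-factroid of $A$. In particular, any intersection $\bigcap_i \mathfrak{p}_i$ of prime ideals $\mathfrak{p}_i$ of $A$ is an $(A\setminus \bigcup_i \mathfrak{p}_i)$-factroid of $A$.
   Context: For $T\subseteq A$, a $T$-factroid of $A$ is an additive subgroup $F$ of $A$ such that for all $a\in A$ and $t\in T$, $ta\in F$ implies $a\in F$. *)

theory Defs
  imports "HOL-Algebra.Algebra"
begin

definition radical :: "('a, 'b) ring_scheme \<Rightarrow> 'a set \<Rightarrow> 'a set" where
  "radical R q = {a \<in> carrier R. \<exists>n::nat. a [^]\<^bsub>R\<^esub> n \<in> q}"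

definition primary_ideal :: "'a set \<Rightarrow> ('a, 'b) ring_scheme \<Rightarrow> bool" where
  "primary_ideal q R \<longleftrightarrow> ideal q R \<and> q \<noteq> carrier R \<and>
     (\<forall>a\<in>carrier R. \<forall>b\<in>carrier R. a \<otimes>\<^bsub>R\<^esub> b \<in> q \<longrightarrow>
        a \<in> q \<or> (\<exists>n::nat. b [^]\<^bsub>R\<^esub> n \<in> q))"

definition factroid :: "('a, 'b) ring_scheme \<Rightarrow> 'a set \<Rightarrow> 'a set \<Rightarrow> bool" where
  "factroid R T F \<longleftrightarrow> T \<subseteq> carrier R \<and> additive_subgroup F R \<and>
     (\<forall>a\<in>carrier R. \<forall>t\<in>T. t \<otimes>\<^bsub>R\<^esub> a \<in> F \<longrightarrow> a \<in> F)"

end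

theory Submission
  imports Defs
begin

lemma inter_ideals_add_subgroup:
  fixes R (structure)
  assumes R: "cring R" and J: "\<forall>i\<in>I. ideal (J i) R"
  shows "additive_subgroup (carrier R \<inter> (\<Inter>i\<in>I. J i)) R"
proof -
  interpret cring R by fact
  show ?thesis
  proof (rule additive_subgroup.intro, rule subgroup.intro)
    show "carrier R \<inter> (\<Inter>i\<in>I. J i) \<subseteq> carrier (add_monoid R)" by simp
    show "\<one>\<^bsub>add_monoid R\<^esub> \<in> carrier R \<inter> (\<Inter>i\<in>I. J i)"
      using J by (simp add: additive_subgroup.zero_closed ideal.axioms(1))
    fix x y assume x: "x \<in> carrier R \<inter> (\<Inter>i\<in>I. J i)" and y: "y \<in> carrier R \<inter> (\<Inter>i\<in>I. J i)"
    show "x \<otimes>\<^bsub>add_monoid R\<^esub> y \<in> carrier R \<inter> (\<Inter>i\<in>I. J i)"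
      using x y J by (auto simp: additive_subgroup.a_closed ideal.axioms(1))
  next
    fix x assume x: "x \<in> carrier R \<inter> (\<Inter>i\<in>I. J i)"
    have "inv\<^bsub>add_monoid R\<^esub> x = \<ominus> x" by (simp add: a_inv_def)
    then show "inv\<^bsub>add_monoid R\<^esub> x \<in> carrier R \<inter> (\<Inter>i\<in>I. J i)"
      using x J by (auto simp: additive_subgroup.a_inv_closed ideal.axioms(1))
  qed
qed

theorem proposition4p7:
  fixes R :: "('a, 'b) ring_scheme" and I :: "'i set"
  assumes "cring R"
  shows "(\<forall>q :: 'i \<Rightarrow> 'a set. (\<forall>i\<in>I. primary_ideal (q i) R) \<longrightarrow>
            factroid R (carrier R - (\<Union>i\<in>I. radical R (q i)))
                       (carrier R \<inter> (\<Inter>i\<in>I. q i)))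
       \<and> (\<forall>p :: 'i \<Rightarrow> 'a set. (\<forall>i\<in>I. primeideal (p i) R) \<longrightarrow>
            factroid R (carrier R - (\<Union>i\<in>I. p i))
                       (carrier R \<inter> (\<Inter>i\<in>I. p i)))"
proof (intro conjI allI impI)
  interpret cring R by fact
  fix q :: "'i \<Rightarrow> 'a set" assume q: "\<forall>i\<in>I. primary_ideal (q i) R"
  have sub: "additive_subgroup (carrier R \<inter> (\<Inter>i\<in>I. q i)) R"
    using inter_ideals_add_subgroup[OF assms, of I q] q by (simp add: primary_ideal_def)
  show "factroid R (carrier R - (\<Union>i\<in>I. radical R (q i))) (carrier R \<inter> (\<Inter>i\<in>I. q i))"
    unfolding factroid_def
  proof (intro conjI sub ballI impI)
    fix a t assume a: "a \<in> carrier R" and t: "t \<in> carrier R - (\<Union>i\<in>I. radical R (q i))"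
      and ta: "t \<otimes>\<^bsub>R\<^esub> a \<in> carrier R \<inter> (\<Inter>i\<in>I. q i)"
    have "a \<in> q i" if i: "i \<in> I" for i
    proof -
      have "a \<otimes>\<^bsub>R\<^esub> t \<in> q i" using ta i t a by (simp add: m_comm)
      moreover have "\<not> (\<exists>n::nat. t [^]\<^bsub>R\<^esub> n \<in> q i)" using t i by (auto simp: radical_def)
      ultimately show ?thesis using q i a t unfolding primary_ideal_def by blast
    qed
    then show "a \<in> carrier R \<inter> (\<Inter>i\<in>I. q i)" using a by blast
  qed auto
next
  interpret cring R by fact
  fix p :: "'i \<Rightarrow> 'a set" assume p: "\<forall>i\<in>I. primeideal (p i) R"
  have sub: "additive_subgroup (carrier R \<inter> (\<Inter>i\<in>I. p i)) R"
    using inter_ideals_add_subgroup[OF assms, of I p] p by (simp add: primeideal.axioms(1))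
  show "factroid R (carrier R - (\<Union>i\<in>I. p i)) (carrier R \<inter> (\<Inter>i\<in>I. p i))"
    unfolding factroid_def
  proof (intro conjI sub ballI impI)
    fix a t assume a: "a \<in> carrier R" and t: "t \<in> carrier R - (\<Union>i\<in>I. p i)"
      and ta: "t \<otimes>\<^bsub>R\<^esub> a \<in> carrier R \<inter> (\<Inter>i\<in>I. p i)"
    have "a \<in> p i" if i: "i \<in> I" for i
      using primeideal.I_prime[of "p i" R t a] p i t a ta by auto
    then show "a \<in> carrier R \<inter> (\<Inter>i\<in>I. p i)" using a by blast
  qed auto
qed

end
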